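(* Let $d\ge2$ and $g=\sum_{\mathbf k\in\mathbb Z^d}g_{\mathbf k}u^{\mathbf k}\in R_d$. Then $g\in (f^{(d)})+\mathscr I_d^3$ if and only if all of the following hold: (A) $\sum_{\mathbf k}g_{\mathbf k}=0$; (B) $\sum_{\mathbf k}g_{\mathbf k}k_i=0$ for $i=1,\dots,d$; (C) $\sum_{\mathbf k}g_{\mathbf k}k_ik_j=0$ for $1\le i\ne j\le d$; (D) $\sum_{\mathbf k}g_{\mathbf k}(k_i^2-k_j^2)=0$ for $1\le i\ne j\le d$, where $\mathbf k=(k_1,\dots,k_d)$.
   Context: $R_d=\mathbb Z[u_1^{\pm1},\dots,u_d^{\pm1}]$, $u^{\mathbf k}=u_1^{k_1}\cdots u_d^{k_d}$. $f^{(d)}=2d-\sum_{i=1}^d(u_i+u_i^{-1})$, $(f^{(d)})=f^{(d)}R_d$. $\mathscr I_d=\{h\in R_d:h(1,\dots,1)=0\}$, and $\mathscr I_d^3$ is its third power. *)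

theory Defs
  imports "HOL-Library.Poly_Mapping" "HOL-Analysis.Finite_Cartesian_Product"
begin

text \<open>Laurent polynomial ring R_d = Z[u_1^{+-1},...,u_d^{+-1}], realised as finitely
supported functions Z^d -> Z (exponent vectors indexed by a finite type 'n with
CARD('n) = d), with the convolution product of Poly_Mapping.\<close>

type_synonym 'n laurent = "(int ^ 'n) \<Rightarrow>\<^sub>0 int"

definition mono :: "int ^ 'n \<Rightarrow> 'n laurent" where
  "mono k = Poly_Mapping.single k 1"

definition var :: "('n::finite) \<Rightarrow> 'n laurent" where
  "var i = mono (\<chi> j. if j = i then 1 else 0)"

definition var_inv :: "('n::finite) \<Rightarrow> 'n laurent" where
  "var_inv i = mono (\<chi> j. if j = i then -1 else 0)"

definition fd :: "('n::finite) laurent" where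
  "fd = of_nat (2 * CARD('n)) - (\<Sum>i\<in>UNIV. var i + var_inv i)"

definition eval_ones :: "'n laurent \<Rightarrow> int" where
  "eval_ones h = (\<Sum>k\<in>Poly_Mapping.keys h. Poly_Mapping.lookup h k)"

definition aug_ideal :: "'n laurent set" where
  "aug_ideal = {h. eval_ones h = 0}"

inductive_set ideal_cube :: "'a::comm_ring_1 set \<Rightarrow> 'a set" for I where
  zero: "0 \<in> ideal_cube I"
| prod: "a \<in> I \<Longrightarrow> b \<in> I \<Longrightarrow> c \<in> I \<Longrightarrow> a * b * c \<in> ideal_cube I"
| add: "x \<in> ideal_cube I \<Longrightarrow> y \<in> ideal_cube I \<Longrightarrow> x + y \<in> ideal_cube I"
| mult: "x \<in> ideal_cube I \<Longrightarrow> r * x \<in> ideal_cube I"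

definition in_fd_plus_cube :: "('n::finite) laurent \<Rightarrow> bool" where
  "in_fd_plus_cube g \<longleftrightarrow> (\<exists>h q. q \<in> ideal_cube aug_ideal \<and> g = fd * h + q)"

end

theory Submission imports Defs begin

definition mom :: "(int ^ 'n \<Rightarrow> int) \<Rightarrow> 'n laurent \<Rightarrow> int" where
  "mom w p = (\<Sum>k\<in>Poly_Mapping.keys p. Poly_Mapping.lookup p k * w k)"

lemma mom_superset:
  assumes "finite S" "Poly_Mapping.keys p \<subseteq> S"
  shows "mom w p = (\<Sum>k\<in>S. Poly_Mapping.lookup p k * w k)"
  unfolding mom_def using assms
  by (intro sum.mono_neutral_left) (auto simp: in_keys_iff)

lemma mom_0 [simp]: "mom w 0 = 0"
  by (simp add: mom_def)

lemma mom_add [simp]: "mom w (p + q) = mom w p + mom w q"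
proof -
  let ?S = "Poly_Mapping.keys p \<union> Poly_Mapping.keys q"
  have f: "finite ?S" by simp
  have "Poly_Mapping.keys (p + q) \<subseteq> ?S" by (rule keys_add)
  then have "mom w (p+q) = (\<Sum>k\<in>?S. Poly_Mapping.lookup (p+q) k * w k)"
    using f mom_superset by blast
  also have "\<dots> = (\<Sum>k\<in>?S. Poly_Mapping.lookup p k * w k) + (\<Sum>k\<in>?S. Poly_Mapping.lookup q k * w k)"
    by (simp add: lookup_add distrib_right sum.distrib)
  also have "\<dots> = mom w p + mom w q"
    using f mom_superset[of ?S p w] mom_superset[of ?S q w] by auto
  finally show ?thesis .
qed

lemma mom_uminus [simp]: "mom w (- p) = - mom w p"
  by (simp add: mom_def sum_negf)

lemma mom_diff [simp]: "mom w (p - q) = mom w p - mom w q"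
  using mom_add[of w p "-q"] by simp

lemma mom_single [simp]: "mom w (Poly_Mapping.single k c) = c * w k"
  by (simp add: mom_def)

lemma mom_sum: "finite F \<Longrightarrow> mom w (sum f F) = (\<Sum>i\<in>F. mom w (f i))"
  by (induction F rule: finite_induct) auto

lemma bilin_induct:
  fixes P :: "'n laurent \<Rightarrow> 'n laurent \<Rightarrow> bool"
  assumes s: "\<And>x y. P (frag_of x) (frag_of y)"
    and d1: "\<And>a b q. P a q \<Longrightarrow> P b q \<Longrightarrow> P (a - b) q"
    and d2: "\<And>p a b. P p a \<Longrightarrow> P p b \<Longrightarrow> P p (a - b)"
    and z1: "\<And>q. P 0 q" and z2: "\<And>p. P p 0"
  shows "P p q"
proof -
  have "\<forall>q. P p q"
  proof (induction p rule: frag_induction[OF subset_UNIV])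
    case 1 then show ?case using z1 by blast
  next
    case (2 x)
    show ?case
    proof
      fix q show "P (frag_of x) q"
        by (induction q rule: frag_induction[OF subset_UNIV]) (auto intro: s d2 z2)
    qed
  next
    case (3 a b) then show ?case using d1 by blast
  qed
  then show ?thesis by blast
qed

abbreviation "M0 \<equiv> mom (\<lambda>k. 1)"
abbreviation "M1 i \<equiv> mom (\<lambda>k. k $ i)"
abbreviation "M2 i j \<equiv> mom (\<lambda>k. k $ i * k $ j)"

lemma leib0: "M0 (p * q) = M0 p * M0 q"
  by (induction p q rule: bilin_induct) (auto simp: mult_single left_diff_distrib right_diff_distrib)

lemma leib1: "M1 i (p * q) = M1 i p * M0 q + M0 p * M1 i q"
  by (induction p q rule: bilin_induct) (auto simp: mult_single left_diff_distrib right_diff_distrib algebra_simps)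

lemma leib2: "M2 i j (p * q) = M2 i j p * M0 q + M1 i p * M1 j q + M1 j p * M1 i q + M0 p * M2 i j q"
  by (induction p q rule: bilin_induct) (auto simp: mult_single left_diff_distrib right_diff_distrib algebra_simps)

abbreviation "cube \<equiv> ideal_cube (aug_ideal :: 'n::finite laurent set)"

lemma aug_iff: "p \<in> aug_ideal \<longleftrightarrow> M0 p = 0"
  by (simp add: aug_ideal_def eval_ones_def mom_def)

lemma cube_neg: "x \<in> ideal_cube I \<Longrightarrow> - x \<in> ideal_cube I"
  using ideal_cube.mult[of x I "-1"] by simp

lemma cube_diff: "x \<in> ideal_cube I \<Longrightarrow> y \<in> ideal_cube I \<Longrightarrow> x - y \<in> ideal_cube I"
proof -
  assume "x \<in> ideal_cube I" "y \<in> ideal_cube I"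
  then have "x + - y \<in> ideal_cube I" by (intro ideal_cube.add cube_neg)
  then show ?thesis by (simp only: diff_conv_add_uminus)
qed

lemma cube_multr: "x \<in> ideal_cube I \<Longrightarrow> x * r \<in> ideal_cube I"
  using ideal_cube.mult[of x I r] by (simp add: mult.commute)

lemma cube_sum: "finite F \<Longrightarrow> (\<And>i. i \<in> F \<Longrightarrow> f i \<in> ideal_cube I) \<Longrightarrow> sum f F \<in> ideal_cube I"
  by (induction F rule: finite_induct) (auto intro: ideal_cube.intros)

definition Zm :: "'n::finite laurent \<Rightarrow> bool" where
  "Zm q \<longleftrightarrow> M0 q = 0 \<and> (\<forall>i. M1 i q = 0) \<and> (\<forall>i j. M2 i j q = 0)"

lemma cube_Zm: "q \<in> cube \<Longrightarrow> Zm q"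
proof (induction rule: ideal_cube.induct)
  case zero then show ?case by (simp add: Zm_def)
next
  case (prod a b c) then show ?case by (simp add: Zm_def aug_iff leib0 leib1 leib2)
next
  case (add x y) then show ?case by (simp add: Zm_def)
next
  case (mult x r) then show ?case by (simp add: Zm_def leib0 leib1 leib2)
qed

lemma of_int_single: "(of_int c :: 'n::finite laurent) = Poly_Mapping.single 0 c"
  by (metis single_of_int of_int_eq_id id_apply)

lemma of_nat_single': "(of_nat c :: 'n::finite laurent) = Poly_Mapping.single 0 (int c)"
  by (metis single_of_nat of_nat_id)

lemma mom_of_int [simp]: "mom w (of_int c) = c * w 0"
  by (simp only: of_int_single mom_single)

lemma mom_of_nat [simp]: "mom w (of_nat c) = int c * w 0"
  by (simp only: of_nat_single' mom_single)

lemma mom_one [simp]: "mom w 1 = w 0"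
  using mom_of_int[of w 1] by simp

lemma mom_var: "mom w (var i) = w (\<chi> j. if j = i then 1 else 0)"
  by (simp add: var_def mono_def)

lemma mom_var_inv: "mom w (var_inv i) = w (\<chi> j. if j = i then -1 else 0)"
  by (simp add: var_inv_def mono_def)

lemma if_mult_if: "(if a then (x::int) else 0) * (if b then y else 0) = (if a \<and> b then x*y else 0)"
  by simp

lemma sum_if_conjf: "(\<Sum>i\<in>(UNIV::'n::finite set). if l = i \<and> m = i then (c i::int) else 0) = (if l = m then c l else 0)"
proof (cases "l = m")
  case False
  then have "\<And>i. (if l = i \<and> m = i then c i else 0) = 0" by auto
  then show ?thesis using False by simp
qed simp

lemma sum_if_conj: "(\<Sum>i\<in>(UNIV::'n::finite set). if l = i \<and> m = i then (c::int) else 0) = (if l = m then c else 0)"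
proof (cases "l = m")
  case False
  then have "\<And>i. (if l = i \<and> m = i then c else 0) = 0" by auto
  then show ?thesis using False by simp
qed simp

lemma fd_M0: "M0 (fd :: 'n::finite laurent) = 0"
  unfolding fd_def of_nat_single' by (simp add: mom_sum mom_var mom_var_inv sum.distrib if_mult_if sum_if_conj del: single_of_nat)

lemma fd_M1: "M1 l (fd :: 'n::finite laurent) = 0"
  unfolding fd_def of_nat_single' by (simp add: mom_sum mom_var mom_var_inv sum.distrib if_mult_if sum_if_conj del: single_of_nat)

lemma fd_M2: "M2 l m (fd :: 'n::finite laurent) = (if l = m then -2 else 0)"
  unfolding fd_def of_nat_single' by (simp add: mom_sum mom_var mom_var_inv sum.distrib if_mult_if sum_if_conj del: single_of_nat)


definition xv :: "'n::finite \<Rightarrow> 'n laurent" where "xv i = var i - 1"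

definition lin :: "('n::finite \<Rightarrow> int) \<Rightarrow> 'n laurent" where
  "lin a = (\<Sum>i\<in>UNIV. of_int (a i) * xv i)"

definition quad :: "('n::finite \<Rightarrow> 'n \<Rightarrow> int) \<Rightarrow> 'n laurent" where
  "quad b = (\<Sum>i\<in>UNIV. \<Sum>j\<in>UNIV. of_int (b i j) * (xv i * xv j))"

definition bform :: "int \<Rightarrow> ('n::finite \<Rightarrow> int) \<Rightarrow> ('n \<Rightarrow> 'n \<Rightarrow> int) \<Rightarrow> 'n laurent" where
  "bform c a b = of_int c + lin a + quad b"

lemma xv_M0 [simp]: "M0 (xv i) = 0"
  by (simp add: xv_def mom_var)
lemma xv_M1 [simp]: "M1 l (xv i) = (if l = i then 1 else 0)"
  by (simp add: xv_def mom_var)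
lemma xv_M2 [simp]: "M2 l m (xv i) = (if l = i \<and> m = i then 1 else 0)"
  by (simp add: xv_def mom_var)

lemma lin_M0 [simp]: "M0 (lin a) = 0"
  by (simp add: lin_def mom_sum leib0)
lemma lin_M1 [simp]: "M1 l (lin a) = a l"
  by (simp add: lin_def mom_sum leib0 leib1 if_distrib cong: if_cong)
lemma lin_M2 [simp]: "M2 l m (lin a) = (if l = m then a l else 0)"
proof -
  have "M2 l m (lin a) = (\<Sum>i\<in>UNIV. a i * (if l = i \<and> m = i then 1 else 0))"
    by (simp add: lin_def mom_sum leib0 leib1 leib2 cong: if_cong)
  also have "\<dots> = (\<Sum>i\<in>UNIV. if l = i \<and> m = i then a i else 0)"
    by (rule sum.cong) auto
  finally have "M2 l m (lin a) = (\<Sum>i\<in>UNIV. if l = i \<and> m = i then a i else 0)" .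
  then show ?thesis by (simp add: sum_if_conjf)
qed

lemma quad_M0 [simp]: "M0 (quad b) = 0"
  by (simp add: quad_def mom_sum leib0)
lemma xx_M0: "M0 (xv i * xv j) = 0"
  by (simp add: leib0)
lemma xx_M1: "M1 l (xv i * xv j) = 0"
  by (simp add: leib1)
lemma quad_M1 [simp]: "M1 l (quad b) = 0"
  by (simp add: quad_def mom_sum leib0 leib1)
lemma xx_M2: "M2 l m (xv i * xv j) = (if l = i \<and> m = j then 1 else 0) + (if m = i \<and> l = j then 1 else 0)"
  by (simp only: leib2 xv_M0 xv_M1 xv_M2 mult_zero_right mult_zero_left add_0_left add_0_right if_mult_if mult_1_right)

lemma sum2_delta: "(\<Sum>i\<in>(UNIV::'n::finite set). \<Sum>j\<in>(UNIV::'n set). (b i j::int) * (if l = i \<and> m = j then 1 else 0)) = b l m"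
proof -
  have "\<And>i. (\<Sum>j\<in>(UNIV::'n set). (b i j::int) * (if l = i \<and> m = j then 1 else 0)) = (if l = i then b i m else 0)"
    by (auto simp: if_distrib cong: if_cong)
  then show ?thesis by simp
qed

lemma quad_M2 [simp]: "M2 l m (quad b) = b l m + b m l"
proof -
  have "M2 l m (quad b) = (\<Sum>i\<in>UNIV. \<Sum>j\<in>UNIV. b i j * (if l = i \<and> m = j then 1 else 0))
     + (\<Sum>i\<in>UNIV. \<Sum>j\<in>UNIV. b i j * (if m = i \<and> l = j then 1 else 0))"
  proof -
    have t: "M2 l m (of_int (b i j) * (xv i * xv j)) = b i j * (if l = i \<and> m = j then 1 else 0) + b i j * (if m = i \<and> l = j then 1 else 0)" for i j
      using leib2[of l m "of_int (b i j)" "xv i * xv j"]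
      by (simp only: mom_of_int xx_M0 xx_M1 xx_M2 zero_index mult_zero_right mult_zero_left add_0_left add_0_right distrib_left mult_1_right)
    show ?thesis unfolding quad_def
      by (simp only: mom_sum[OF finite_class.finite_UNIV] t sum.distrib)
  qed
  then show ?thesis by (simp only: sum2_delta)
qed


lemma bform_M0 [simp]: "M0 (bform c a b) = c"
  by (simp add: bform_def)
lemma bform_M1 [simp]: "M1 l (bform c a b) = a l"
  by (simp add: bform_def)
lemma bform_M2 [simp]: "M2 l m (bform c a b) = (if l = m then a l else 0) + b l m + b m l"
  by (simp add: bform_def)

lemma lin_zero [simp]: "lin (\<lambda>i. 0) = 0"
  by (simp add: lin_def)
lemma quad_zero [simp]: "quad (\<lambda>i j. 0) = 0"
  by (simp add: quad_def)

lemma double_zero: "(p::'n::finite laurent) + p = 0 \<Longrightarrow> p = 0"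
proof (rule poly_mapping_eqI)
  fix k assume "p + p = 0"
  then have "Poly_Mapping.lookup p k + Poly_Mapping.lookup p k = 0" by (metis lookup_add lookup_zero)
  then show "Poly_Mapping.lookup p k = Poly_Mapping.lookup 0 k" by simp
qed

lemma quad_sym: "quad b + quad b = quad (\<lambda>i j. b i j + b j i)"
proof -
  have "quad (\<lambda>i j. b j i) = (\<Sum>j\<in>UNIV. \<Sum>i\<in>UNIV. of_int (b j i) * (xv i * xv j))"
    unfolding quad_def by (rule sum.swap)
  also have "\<dots> = quad b" unfolding quad_def by (simp add: mult.commute)
  finally have "quad (\<lambda>i j. b j i) = quad b" .
  moreover have "quad (\<lambda>i j. b i j + b j i) = quad b + quad (\<lambda>i j. b j i)"
    unfolding quad_def by (simp add: distrib_right sum.distrib)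
  ultimately show ?thesis by simp
qed

lemma bform_zero:
  assumes "Zm (bform c a b)"
  shows "bform c a b = 0"
proof -
  have c: "c = 0" using assms by (simp add: Zm_def)
  have a: "a = (\<lambda>i. 0)" using assms by (auto simp: Zm_def)
  have "\<And>l m. b l m + b m l = 0"
  proof -
    fix l m
    have "M2 l m (bform c a b) = 0" using assms by (simp add: Zm_def)
    then show "b l m + b m l = 0" using a by simp
  qed
  then have "quad b + quad b = 0" by (simp add: quad_sym)
  then have "quad b = 0" by (rule double_zero)
  then show ?thesis using a c by (simp add: bform_def)
qed

lemma xv_aug [simp]: "xv i \<in> aug_ideal"
  by (simp add: aug_iff)
lemma lin_aug [simp]: "lin a \<in> aug_ideal"
  by (simp add: aug_iff)
lemma quad_aug [simp]: "quad a \<in> aug_ideal"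
  by (simp add: aug_iff)

lemma aug_quad_cube:
  assumes "y \<in> aug_ideal"
  shows "y * quad b \<in> cube"
proof -
  have "y * quad b = (\<Sum>i\<in>UNIV. \<Sum>j\<in>UNIV. of_int (b i j) * (y * xv i * xv j))"
    by (simp add: quad_def sum_distrib_left mult_ac)
  also have "\<dots> \<in> cube"
    by (intro cube_sum ideal_cube.mult ideal_cube.prod assms xv_aug) auto
  finally show ?thesis .
qed

lemma bform_mult:
  "bform c a b * bform c' a' b' - bform (c*c') (\<lambda>i. c * a' i + c' * a i) (\<lambda>i j. a i * a' j + c * b' i j + c' * b i j) \<in> cube"
proof -
  have e1: "lin (\<lambda>i. c * a' i + c' * a i) = of_int c * lin a' + of_int c' * lin a"
    unfolding lin_def by (simp add: sum_distrib_left sum.distrib algebra_simps)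
  have LL: "lin a * lin a' = (\<Sum>i\<in>UNIV. \<Sum>j\<in>UNIV. of_int (a i * a' j) * (xv i * xv j))"
    unfolding lin_def sum_product by (simp add: mult_ac)
  have e2: "quad (\<lambda>i j. a i * a' j + c * b' i j + c' * b i j) = lin a * lin a' + of_int c * quad b' + of_int c' * quad b"
    unfolding LL unfolding quad_def by (simp add: sum_distrib_left sum.distrib algebra_simps)
  have "bform c a b * bform c' a' b' - bform (c*c') (\<lambda>i. c * a' i + c' * a i) (\<lambda>i j. a i * a' j + c * b' i j + c' * b i j)
     = lin a * quad b' + lin a' * quad b + quad b * quad b'"
    unfolding bform_def e1 e2 by (simp add: algebra_simps)
  also have "\<dots> \<in> cube"
    by (intro ideal_cube.add aug_quad_cube lin_aug quad_aug)
  finally show ?thesis .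
qed


definition inM :: "'n::finite laurent \<Rightarrow> bool" where
  "inM p \<longleftrightarrow> (\<exists>c a b. p - bform c a b \<in> cube)"

lemma inM_0: "inM 0"
  unfolding inM_def by (rule exI[of _ 0], rule exI[of _ "\<lambda>i. 0"], rule exI[of _ "\<lambda>i j. 0"])
    (simp add: bform_def ideal_cube.zero)

lemma bform_diff: "bform c a b - bform c' a' b' = bform (c - c') (\<lambda>i. a i - a' i) (\<lambda>i j. b i j - b' i j)"
  unfolding bform_def lin_def quad_def by (simp add: sum_subtractf algebra_simps)

lemma inM_diff: "inM p \<Longrightarrow> inM q \<Longrightarrow> inM (p - q)"
proof -
  assume "inM p" "inM q"
  then obtain c a b c' a' b' where 1: "p - bform c a b \<in> cube" and 2: "q - bform c' a' b' \<in> cube"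
    unfolding inM_def by blast
  have "p - q - bform (c - c') (\<lambda>i. a i - a' i) (\<lambda>i j. b i j - b' i j) = (p - bform c a b) - (q - bform c' a' b')"
    by (simp add: bform_diff[symmetric])
  also have "\<dots> \<in> cube" using 1 2 by (rule cube_diff)
  finally show ?thesis unfolding inM_def by blast
qed

lemma inM_mult: "inM p \<Longrightarrow> inM q \<Longrightarrow> inM (p * q)"
proof -
  assume "inM p" "inM q"
  then obtain c a b c' a' b' where 1: "p - bform c a b \<in> cube" and 2: "q - bform c' a' b' \<in> cube"
    unfolding inM_def by blast
  let ?e = "bform (c*c') (\<lambda>i. c * a' i + c' * a i) (\<lambda>i j. a i * a' j + c * b' i j + c' * b i j)"
  have "p * q - ?e = p * (q - bform c' a' b') + (p - bform c a b) * bform c' a' b' + (bform c a b * bform c' a' b' - ?e)"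
    by (simp add: algebra_simps)
  also have "\<dots> \<in> cube"
    by (intro ideal_cube.add ideal_cube.mult cube_multr 1 2 bform_mult)
  finally show ?thesis unfolding inM_def by blast
qed

lemma inM_1: "inM 1"
proof -
  have "1 - bform 1 (\<lambda>i. 0) (\<lambda>i j. 0) = (0 :: 'n::finite laurent)" by (simp add: bform_def)
  then show ?thesis unfolding inM_def by (metis ideal_cube.zero)
qed

lemma inM_var: "inM (var i)"
proof -
  have "lin (\<lambda>j. if j = i then 1 else 0) = (\<Sum>j\<in>UNIV. if j = i then xv j else 0)"
    unfolding lin_def by (rule sum.cong) auto
  then have "lin (\<lambda>j. if j = i then 1 else 0) = xv i" by simp
  then have "var i - bform 1 (\<lambda>j. if j = i then 1 else 0) (\<lambda>i j. 0) = 0"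
    by (simp add: bform_def xv_def)
  then show ?thesis unfolding inM_def by (metis ideal_cube.zero)
qed

lemma var_var_inv: "var i * var_inv i = 1"
proof -
  have "(\<chi> j. if j = i then 1 else 0) + (\<chi> j. if j = i then -1 else 0) = (0 :: int ^ 'a)"
    by (simp add: vec_eq_iff)
  then show ?thesis by (simp add: var_def var_inv_def mono_def mult_single)
qed

lemma inM_var_inv: "inM (var_inv i)"
proof -
  have "lin (\<lambda>j. if j = i then -1 else 0) = (\<Sum>j\<in>UNIV. if j = i then - xv j else 0)"
    unfolding lin_def by (rule sum.cong) auto
  then have l: "lin (\<lambda>j. if j = i then -1 else 0) = - xv i" by simp
  have q: "quad (\<lambda>j l. if j = i \<and> l = i then 1 else 0) = xv i * xv i"
  proof -
    have "\<And>j. (\<Sum>l\<in>UNIV. of_int (if j = i \<and> l = i then 1 else 0) * (xv j * xv l)) = (if j = i then xv i * xv i else 0)"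
    proof -
      fix j
      have "(\<Sum>l\<in>UNIV. of_int (if j = i \<and> l = i then 1 else 0) * (xv j * xv l)) = (\<Sum>l\<in>UNIV. if l = i then (if j = i then xv j * xv l else 0) else 0)"
        by (rule sum.cong) auto
      then show "(\<Sum>l\<in>UNIV. of_int (if j = i \<and> l = i then 1 else 0) * (xv j * xv l)) = (if j = i then xv i * xv i else 0)"
        by simp
    qed
    then show ?thesis unfolding quad_def by simp
  qed
  have u: "var i = xv i + 1" by (simp add: xv_def)
  have "var_inv i - bform 1 (\<lambda>j. if j = i then -1 else 0) (\<lambda>j l. if j = i \<and> l = i then 1 else 0)
      = (- var_inv i) * (xv i * xv i * xv i)"
  proof -
    have vv: "var_inv i * (xv i + 1) = 1" using var_var_inv[of i] u by (simp add: mult.commute)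
    have "var_inv i - (1 - xv i + xv i * xv i) = (- var_inv i) * (xv i * xv i * xv i) + (var_inv i * (xv i + 1) - 1) * (1 - xv i + xv i * xv i)"
      by (simp add: algebra_simps)
    then show ?thesis using vv by (simp add: bform_def l q)
  qed
  also have "\<dots> \<in> cube" by (intro ideal_cube.mult ideal_cube.prod xv_aug)
  finally show ?thesis unfolding inM_def by blast
qed


definition ev :: "'n::finite \<Rightarrow> int \<Rightarrow> int ^ 'n" where
  "ev i m = (\<chi> j. if j = i then m else 0)"

lemma inM_ev: "inM (mono (ev i m))"
proof (induction m rule: int_induct[where k=0])
  case base
  have "ev i 0 = 0" by (simp add: ev_def vec_eq_iff)
  then show ?case using inM_1 by (simp add: mono_def)
next
  case (step1 m)
  have e: "ev i (m + 1) = ev i m + (\<chi> j. if j = i then 1 else 0)" by (simp add: ev_def vec_eq_iff)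
  have "mono (ev i (m + 1)) = mono (ev i m) * var i"
    unfolding e by (simp add: mono_def var_def mult_single)
  then show ?case using step1 inM_mult inM_var by metis
next
  case (step2 m)
  have e: "ev i (m - 1) = ev i m + (\<chi> j. if j = i then -1 else 0)" by (simp add: ev_def vec_eq_iff)
  have "mono (ev i (m - 1)) = mono (ev i m) * var_inv i"
    unfolding e by (simp add: mono_def var_inv_def mult_single)
  then show ?case using step2 inM_mult inM_var_inv by metis
qed

lemma prod_mono: "finite F \<Longrightarrow> (\<Prod>i\<in>F. mono (f i)) = (mono (\<Sum>i\<in>F. f i) :: 'n::finite laurent)"
  by (induction F rule: finite_induct) (auto simp: mono_def mult_single)

lemma inM_prod: "finite F \<Longrightarrow> (\<And>i. i \<in> F \<Longrightarrow> inM (f i)) \<Longrightarrow> inM (prod f F)"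
  by (induction F rule: finite_induct) (auto intro: inM_1 inM_mult)

lemma inM_mono: "inM (mono k)"
proof -
  have "(\<Sum>i\<in>UNIV. ev i (k $ i)) = k"
    by (simp add: vec_eq_iff ev_def)
  then have "mono k = (\<Prod>i\<in>UNIV. mono (ev i (k $ i)))"
    by (simp add: prod_mono)
  then show ?thesis by (simp add: inM_prod inM_ev)
qed

lemma inM_all: "inM p"
proof (induction p rule: frag_induction[OF subset_UNIV])
  case 1 then show ?case by (rule inM_0)
next
  case (2 x) then show ?case using inM_mono[of x] by (simp add: mono_def)
next
  case (3 a b) then show ?case by (rule inM_diff)
qed

lemma Zm_cube: "Zm q \<Longrightarrow> q \<in> cube"
proof -
  assume z: "Zm q"
  obtain c a b where 1: "q - bform c a b \<in> cube" using inM_all[of q] unfolding inM_def by blast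
  have "Zm (q - bform c a b)" using 1 by (rule cube_Zm)
  then have "Zm (bform c a b)" using z by (simp add: Zm_def)
  then have "bform c a b = 0" by (rule bform_zero)
  then show ?thesis using 1 by simp
qed


lemma conv0: "(\<Sum>k\<in>Poly_Mapping.keys g. Poly_Mapping.lookup g k) = M0 g"
  by (simp add: mom_def)
lemma conv1: "(\<Sum>k\<in>Poly_Mapping.keys g. Poly_Mapping.lookup g k * k $ i) = M1 i g"
  by (simp add: mom_def)
lemma conv2: "(\<Sum>k\<in>Poly_Mapping.keys g. Poly_Mapping.lookup g k * (k $ i * k $ j)) = M2 i j g"
  by (simp add: mom_def)
lemma conv3: "(\<Sum>k\<in>Poly_Mapping.keys g. Poly_Mapping.lookup g k * ((k $ i)^2 - (k $ j)^2)) = M2 i i g - M2 j j g"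
  by (simp add: mom_def power2_eq_square right_diff_distrib sum_subtractf)

lemma even_M2: "M1 i g = 0 \<Longrightarrow> even (M2 i i g)"
proof -
  assume "M1 i g = 0"
  have "M2 i i g = (\<Sum>k\<in>Poly_Mapping.keys g. Poly_Mapping.lookup g k * (k $ i * k $ i - k $ i)) + M1 i g"
    by (simp add: mom_def right_diff_distrib sum_subtractf)
  moreover have "even (\<Sum>k\<in>Poly_Mapping.keys g. Poly_Mapping.lookup g k * (k $ i * k $ i - k $ i))"
  proof (rule dvd_sum)
    fix k :: "int ^ 'a"
    have "k $ i * k $ i - k $ i = k $ i * (k $ i - 1)" by (simp add: right_diff_distrib)
    moreover have "even (k $ i * (k $ i - 1))" by simp
    ultimately show "even (Poly_Mapping.lookup g k * (k $ i * k $ i - k $ i))" by simp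
  qed
  ultimately show ?thesis using \<open>M1 i g = 0\<close> by simp
qed

theorem lemma2p5:
  fixes g :: "('n::finite) laurent"
  assumes "CARD('n) \<ge> 2"
  shows "in_fd_plus_cube g \<longleftrightarrow>
    (\<Sum>k\<in>Poly_Mapping.keys g. Poly_Mapping.lookup g k) = 0 \<and>
    (\<forall>i. (\<Sum>k\<in>Poly_Mapping.keys g. Poly_Mapping.lookup g k * k $ i) = 0) \<and>
    (\<forall>i j. i \<noteq> j \<longrightarrow> (\<Sum>k\<in>Poly_Mapping.keys g. Poly_Mapping.lookup g k * (k $ i * k $ j)) = 0) \<and>
    (\<forall>i j. i \<noteq> j \<longrightarrow> (\<Sum>k\<in>Poly_Mapping.keys g. Poly_Mapping.lookup g k * ((k $ i)^2 - (k $ j)^2)) = 0)"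
  unfolding conv0 conv1 conv2 conv3
proof
  assume "in_fd_plus_cube g"
  then obtain h q where q: "q \<in> cube" and g: "g = fd * h + q"
    unfolding in_fd_plus_cube_def by blast
  have z: "Zm q" using q by (rule cube_Zm)
  show "M0 g = 0 \<and> (\<forall>i. M1 i g = 0) \<and> (\<forall>i j. i \<noteq> j \<longrightarrow> M2 i j g = 0) \<and> (\<forall>i j. i \<noteq> j \<longrightarrow> M2 i i g - M2 j j g = 0)"
    using z unfolding g Zm_def by (simp add: leib0 leib1 leib2 fd_M0 fd_M1 fd_M2)
next
  assume A: "M0 g = 0 \<and> (\<forall>i. M1 i g = 0) \<and> (\<forall>i j. i \<noteq> j \<longrightarrow> M2 i j g = 0) \<and> (\<forall>i j. i \<noteq> j \<longrightarrow> M2 i i g - M2 j j g = 0)"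
  define i0 :: 'n where "i0 = undefined"
  define c where "c = M2 i0 i0 g div 2"
  have c2: "M2 i0 i0 g = 2 * c" using even_M2[of i0 g] A unfolding c_def by auto
  have dd: "\<And>l. M2 l l g = 2 * c"
  proof -
    fix l show "M2 l l g = 2 * c"
      using A c2 by (cases "l = i0") auto
  qed
  define h :: "'n laurent" where "h = of_int (- c)"
  define q where "q = g - fd * h"
  have "Zm q"
    unfolding Zm_def q_def h_def using A dd
    by (auto simp: leib0 leib1 leib2 fd_M0 fd_M1 fd_M2)
  then have "q \<in> cube" by (rule Zm_cube)
  moreover have "g = fd * h + q" unfolding q_def by simp
  ultimately show "in_fd_plus_cube g" unfolding in_fd_plus_cube_def by blast
qed

end
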